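(* Let $k\ge 1$ be an integer and let $G=(V,E)$ be a $k$-intersection polished graph. Then every set $S\subseteq V$ with $|S|=k$ is contained in at most one maximal clique of $G$.
   Context: All graphs are finite and simple. For a vertex $v$, $N[v]$ denotes its closed neighbourhood (the set of neighbours of $v$ together with $v$). For an integer $k$, $P^k(G)$ is the graph on the same vertex set as $G$ in which two distinct vertices $u,v$ are adjacent if and only if $|N[u]\cap N[v]|\ge k$, the closed neighbourhoods being taken in $G$. A graph $G$ is called $k$-intersection polished if $P^k(G)=G$. A clique is a set of pairwise adjacent vertices; it is maximal if it is not properly contained in another clique. *)

theory Defs
  imports Main
begin

definition simple_graph :: "'a set \<Rightarrow> ('a \<Rightarrow> 'a \<Rightarrow> bool) \<Rightarrow> bool" where
  "simple_graph V E \<longleftrightarrow> finite V \<and> (\<forall>u v. E u v \<longrightarrow> u \<in> V \<and> v \<in> V) \<and>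
     (\<forall>u v. E u v \<longrightarrow> E v u) \<and> (\<forall>v. \<not> E v v)"

definition closed_nbhd :: "'a set \<Rightarrow> ('a \<Rightarrow> 'a \<Rightarrow> bool) \<Rightarrow> 'a \<Rightarrow> 'a set" where
  "closed_nbhd V E v = insert v {u \<in> V. E v u}"

definition Pk_edge :: "nat \<Rightarrow> 'a set \<Rightarrow> ('a \<Rightarrow> 'a \<Rightarrow> bool) \<Rightarrow> 'a \<Rightarrow> 'a \<Rightarrow> bool" where
  "Pk_edge k V E u v \<longleftrightarrow> u \<in> V \<and> v \<in> V \<and> u \<noteq> v \<and>
     card (closed_nbhd V E u \<inter> closed_nbhd V E v) \<ge> k"

definition k_intersection_polished :: "nat \<Rightarrow> 'a set \<Rightarrow> ('a \<Rightarrow> 'a \<Rightarrow> bool) \<Rightarrow> bool" where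
  "k_intersection_polished k V E \<longleftrightarrow> Pk_edge k V E = E"

definition is_clique :: "'a set \<Rightarrow> ('a \<Rightarrow> 'a \<Rightarrow> bool) \<Rightarrow> 'a set \<Rightarrow> bool" where
  "is_clique V E C \<longleftrightarrow> C \<subseteq> V \<and> (\<forall>u\<in>C. \<forall>v\<in>C. u \<noteq> v \<longrightarrow> E u v)"

definition is_maximal_clique :: "'a set \<Rightarrow> ('a \<Rightarrow> 'a \<Rightarrow> bool) \<Rightarrow> 'a set \<Rightarrow> bool" where
  "is_maximal_clique V E C \<longleftrightarrow> is_clique V E C \<and> (\<forall>D. is_clique V E D \<and> C \<subseteq> D \<longrightarrow> D = C)"

end

theory Submission
  imports Defs
begin

theorem mainTheorem3:
  fixes k :: nat and V :: "'a set" and E :: "'a \<Rightarrow> 'a \<Rightarrow> bool" and S :: "'a set"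
  assumes "k \<ge> 1"
    and "simple_graph V E"
    and "k_intersection_polished k V E"
    and "S \<subseteq> V" and "card S = k"
  shows "\<forall>C1 C2. is_maximal_clique V E C1 \<and> is_maximal_clique V E C2 \<and> S \<subseteq> C1 \<and> S \<subseteq> C2
           \<longrightarrow> C1 = C2"
proof (intro allI impI)
  fix C1 C2
  assume h: "is_maximal_clique V E C1 \<and> is_maximal_clique V E C2 \<and> S \<subseteq> C1 \<and> S \<subseteq> C2"
  have fin: "finite V" using assms(2) unfolding simple_graph_def by blast
  have c1: "is_clique V E C1" and c2: "is_clique V E C2" using h unfolding is_maximal_clique_def by auto
  have sub: "S \<subseteq> closed_nbhd V E u" if "is_clique V E C" "S \<subseteq> C" "u \<in> C" for C u
  proof
    fix s assume "s \<in> S"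
    thus "s \<in> closed_nbhd V E u" using that assms(4) unfolding is_clique_def closed_nbhd_def
      by (cases "s = u") auto
  qed
  have edge: "E u v" if "u \<in> C1" "v \<in> C2" "u \<noteq> v" for u v
  proof -
    have "S \<subseteq> closed_nbhd V E u \<inter> closed_nbhd V E v"
      using sub[OF c1 _ that(1)] sub[OF c2 _ that(2)] h by blast
    moreover have "finite (closed_nbhd V E u \<inter> closed_nbhd V E v)"
      using fin unfolding closed_nbhd_def by auto
    ultimately have "card (closed_nbhd V E u \<inter> closed_nbhd V E v) \<ge> k"
      using assms(5) card_mono by metis
    moreover have "u \<in> V" "v \<in> V" using c1 c2 that unfolding is_clique_def by auto
    ultimately have "Pk_edge k V E u v" using that unfolding Pk_edge_def by auto
    thus ?thesis using assms(3) unfolding k_intersection_polished_def by simp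
  qed
  have sym: "\<And>u v. E u v \<Longrightarrow> E v u" using assms(2) unfolding simple_graph_def by blast
  have "is_clique V E (C1 \<union> C2)"
    unfolding is_clique_def
  proof (intro conjI ballI impI)
    show "C1 \<union> C2 \<subseteq> V" using c1 c2 unfolding is_clique_def by auto
  next
    fix u v assume uv: "u \<in> C1 \<union> C2" "v \<in> C1 \<union> C2" "u \<noteq> v"
    show "E u v"
    proof (cases "u \<in> C1")
      case True
      show ?thesis
      proof (cases "v \<in> C2")
        case True thus ?thesis using edge `u \<in> C1` uv(3) by blast
      next
        case False hence "v \<in> C1" using uv by blast
        thus ?thesis using c1 True uv(3) unfolding is_clique_def by blast
      qed
    next
      case False hence u2: "u \<in> C2" using uv by blast
      show ?thesis
      proof (cases "v \<in> C1")
        case True thus ?thesis using edge[OF True u2] uv(3) sym by metis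
      next
        case False hence "v \<in> C2" using uv by blast
        thus ?thesis using c2 u2 uv(3) unfolding is_clique_def by blast
      qed
    qed
  qed
  hence "C1 \<union> C2 = C1" "C1 \<union> C2 = C2" using h unfolding is_maximal_clique_def by auto
  thus "C1 = C2" by auto
qed

end
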